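(* Let $n\ge0$, $h\ge1$, and $t$ an even natural number. Suppose the variety $\mathcal V$ has $n+2$ Gumm terms and satisfies $\alpha(\beta\circ_{2h+1}\alpha\gamma)\subseteq\alpha\beta\circ_t\alpha\gamma$. Then $\mathcal V$ satisfies $$\alpha(\beta\circ_{4h+3}\alpha\gamma)\subseteq\alpha\beta\circ_{t+(4h+2)n}\alpha\gamma,$$ and, more generally, for every $p\ge1$, $\mathcal V$ satisfies $\alpha(\beta\circ_z\alpha\gamma)\subseteq\alpha\beta\circ_{t'}\alpha\gamma$, where $z=2^p(h+1)-1$ and $t'=t+(2^{p+1}-4)hn+(2^{p+1}-2p-2)n$.
   Context: Here $\alpha,\beta,\gamma$ range over congruences of algebras in $\mathcal V$. $\circ$ is relational composition, juxtaposition is intersection. For relations $X,Y$ and $m\ge1$, $X\circ_m Y$ denotes $X\circ Y\circ X\circ\cdots$ with $m$ factors. A variety has $n+2$ Gumm terms if it has ternary terms $p,j_1,\dots,j_{n+1}$ satisfying: $x=j_i(x,y,x)$ for all $i$; $x=p(x,z,z)$; $p(x,x,z)=j_1(x,x,z)$; $j_i(x,z,z)=j_{i+1}(x,z,z)$ for odd $i\le n$; $j_i(x,x,z)=j_{i+1}(x,x,z)$ for even $i\le n$; $j_{n+1}(x,y,z)=z$. *)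

theory Defs
  imports Main
begin

datatype ('f, 'v) trm = Var 'v | App 'f "('f, 'v) trm list"

fun wf_trm :: "('f \<Rightarrow> nat) \<Rightarrow> ('f, 'v) trm \<Rightarrow> bool" where
  "wf_trm ar (Var v) = True"
| "wf_trm ar (App f ts) = (length ts = ar f \<and> (\<forall>s\<in>set ts. wf_trm ar s))"

fun vars_trm :: "('f, 'v) trm \<Rightarrow> 'v set" where
  "vars_trm (Var v) = {v}"
| "vars_trm (App f ts) = (\<Union>s\<in>set ts. vars_trm s)"

record ('f, 'a) alg =
  carrier :: "'a set"
  ops :: "'f \<Rightarrow> 'a list \<Rightarrow> 'a"

fun eval :: "('f, 'a) alg \<Rightarrow> ('v \<Rightarrow> 'a) \<Rightarrow> ('f, 'v) trm \<Rightarrow> 'a" where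
  "eval A \<rho> (Var v) = \<rho> v"
| "eval A \<rho> (App f ts) = ops A f (map (eval A \<rho>) ts)"

definition is_alg :: "('f \<Rightarrow> nat) \<Rightarrow> ('f, 'a) alg \<Rightarrow> bool" where
  "is_alg ar A \<longleftrightarrow> carrier A \<noteq> {} \<and>
     (\<forall>f xs. length xs = ar f \<and> set xs \<subseteq> carrier A \<longrightarrow> ops A f xs \<in> carrier A)"

definition in_var :: "('f \<Rightarrow> nat) \<Rightarrow> (('f, nat) trm \<times> ('f, nat) trm) set \<Rightarrow> ('f, 'a) alg \<Rightarrow> bool" where
  "in_var ar \<Sigma> A \<longleftrightarrow> is_alg ar A \<and>
     (\<forall>(s, t)\<in>\<Sigma>. \<forall>\<rho>. (\<forall>v. \<rho> v \<in> carrier A) \<longrightarrow> eval A \<rho> s = eval A \<rho> t)"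

definition is_cong :: "('f \<Rightarrow> nat) \<Rightarrow> ('f, 'a) alg \<Rightarrow> ('a \<times> 'a) set \<Rightarrow> bool" where
  "is_cong ar A \<theta> \<longleftrightarrow> equiv (carrier A) \<theta> \<and>
     (\<forall>f xs ys. length xs = ar f \<and> length ys = ar f \<and>
        (\<forall>i<ar f. (xs ! i, ys ! i) \<in> \<theta>) \<longrightarrow> (ops A f xs, ops A f ys) \<in> \<theta>)"

text \<open>X \<circ>_m Y = X \<circ> Y \<circ> X \<circ> ... with m factors (m = 0 gives the diagonal).\<close>
fun altc :: "('a \<times> 'a) set \<Rightarrow> ('a \<times> 'a) set \<Rightarrow> nat \<Rightarrow> ('a \<times> 'a) set" where
  "altc X Y 0 = Id"
| "altc X Y (Suc m) = X O altc Y X m"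

definition ev3 :: "('f, 'a) alg \<Rightarrow> ('f, nat) trm \<Rightarrow> 'a \<Rightarrow> 'a \<Rightarrow> 'a \<Rightarrow> 'a" where
  "ev3 A t x y z = eval A (\<lambda>v. if v = 0 then x else if v = 1 then y else z) t"

definition ternary :: "('f \<Rightarrow> nat) \<Rightarrow> ('f, nat) trm \<Rightarrow> bool" where
  "ternary ar t \<longleftrightarrow> wf_trm ar t \<and> vars_trm t \<subseteq> {0, 1, 2}"

definition has_gumm_terms ::
  "'a itself \<Rightarrow> ('f \<Rightarrow> nat) \<Rightarrow> (('f, nat) trm \<times> ('f, nat) trm) set \<Rightarrow> nat \<Rightarrow> bool" where
  "has_gumm_terms _ ar \<Sigma> n \<longleftrightarrow>
    (\<exists>p j. ternary ar p \<and> (\<forall>i\<in>{1..n+1}. ternary ar (j i)) \<and>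
      (\<forall>A :: ('f, 'a) alg. in_var ar \<Sigma> A \<longrightarrow>
        (\<forall>x\<in>carrier A. \<forall>y\<in>carrier A. \<forall>z\<in>carrier A.
          (\<forall>i\<in>{1..n+1}. ev3 A (j i) x y x = x) \<and>
          ev3 A p x z z = x \<and>
          ev3 A p x x z = ev3 A (j 1) x x z \<and>
          (\<forall>i\<in>{1..n}. odd i \<longrightarrow> ev3 A (j i) x z z = ev3 A (j (i+1)) x z z) \<and>
          (\<forall>i\<in>{1..n}. even i \<longrightarrow> ev3 A (j i) x x z = ev3 A (j (i+1)) x x z) \<and>
          ev3 A (j (n+1)) x y z = z)))"

definition sat_incl ::
  "'a itself \<Rightarrow> ('f \<Rightarrow> nat) \<Rightarrow> (('f, nat) trm \<times> ('f, nat) trm) set \<Rightarrow> nat \<Rightarrow> nat \<Rightarrow> bool" where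
  "sat_incl _ ar \<Sigma> k m \<longleftrightarrow>
    (\<forall>A :: ('f, 'a) alg. in_var ar \<Sigma> A \<longrightarrow>
      (\<forall>\<alpha> \<beta> \<gamma>. is_cong ar A \<alpha> \<longrightarrow> is_cong ar A \<beta> \<longrightarrow> is_cong ar A \<gamma> \<longrightarrow>
         \<alpha> \<inter> altc \<beta> (\<alpha> \<inter> \<gamma>) k \<subseteq> altc (\<alpha> \<inter> \<beta>) (\<alpha> \<inter> \<gamma>) m))"

end

theory Submission
  imports Defs
begin

lemma eval_cong:
  assumes c: "is_cong ar A \<theta>"
  shows "wf_trm ar t \<Longrightarrow> (\<forall>v. (\<rho> v, \<rho>' v) \<in> \<theta>) \<Longrightarrow> (eval A \<rho> t, eval A \<rho>' t) \<in> \<theta>"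
proof (induction t)
  case (Var v) then show ?case by simp
next
  case (App f ts)
  have len: "length ts = ar f" using App.prems by simp
  have "\<forall>i<ar f. (map (eval A \<rho>) ts ! i, map (eval A \<rho>') ts ! i) \<in> \<theta>"
  proof (intro allI impI)
    fix i assume "i < ar f"
    then have "ts ! i \<in> set ts" using len by simp
    then show "(map (eval A \<rho>) ts ! i, map (eval A \<rho>') ts ! i) \<in> \<theta>"
      using App.IH[of "ts ! i"] App.prems \<open>i < ar f\<close> len by auto
  qed
  then show ?case using c len unfolding is_cong_def by simp
qed

lemma ev3_cong:
  assumes "is_cong ar A \<theta>" "wf_trm ar t" "(x,x') \<in> \<theta>" "(y,y') \<in> \<theta>" "(z,z') \<in> \<theta>"
  shows "(ev3 A t x y z, ev3 A t x' y' z') \<in> \<theta>"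
  unfolding ev3_def using assms by (intro eval_cong) auto

lemma altc_Suc_right:
  "altc X Y (Suc m) = altc X Y m O (if even m then X else Y)"
proof (induction m arbitrary: X Y)
  case 0 then show ?case by auto
next
  case (Suc m)
  have "altc X Y (Suc (Suc m)) = X O altc Y X (Suc m)" by simp
  also have "\<dots> = X O (altc Y X m O (if even m then Y else X))" using Suc.IH by simp
  finally show ?case by (simp add: O_assoc)
qed

lemma altc_add:
  "altc X Y (m + k) = altc X Y m O (if even m then altc X Y k else altc Y X k)"
proof (induction m arbitrary: X Y)
  case 0 then show ?case by auto
next
  case (Suc m)
  show ?case using Suc.IH[of Y X] by (simp add: O_assoc)
qed

lemma altc_converse:
  assumes "converse X = X" "converse Y = Y"
  shows "converse (altc X Y m) = (if even m then altc Y X m else altc X Y m)"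
  using assms
proof (induction m arbitrary: X Y)
  case 0 then show ?case by simp
next
  case (Suc m)
  have "converse (altc X Y (Suc m)) = converse (altc Y X m) O X"
    using Suc.prems by (simp add: converse_relcomp)
  also have "\<dots> = (if even m then altc X Y m else altc Y X m) O X"
    using Suc.IH[of Y X] Suc.prems by simp
  also have "\<dots> = (if even (Suc m) then altc Y X (Suc m) else altc X Y (Suc m))"
    by (cases "even m") (simp_all only: altc_Suc_right[of X Y] altc_Suc_right[of Y X], simp_all)
  finally show ?case .
qed

lemma altc_merge:
  assumes "X O X \<subseteq> X" "even m"
  shows "altc X Y (Suc m) O altc X Y (Suc k) \<subseteq> altc X Y (m + Suc k)"
proof -
  have "altc X Y (Suc m) O altc X Y (Suc k) = altc X Y m O (X O X) O altc Y X k"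
    using assms(2) by (simp del: altc.simps(2) add: altc_Suc_right[of X Y m] altc.simps(2)[of X Y k] altc.simps(2)[of Y X k] O_assoc)
  also have "\<dots> \<subseteq> altc X Y m O X O altc Y X k"
    using assms(1) by (intro relcomp_mono) auto
  also have "\<dots> = altc X Y (m + Suc k)"
    by (subst altc_add) (simp add: assms(2))
  finally show ?thesis .
qed

lemma altc_merge_odd:
  assumes "Y O Y \<subseteq> Y" "odd m"
  shows "altc X Y (Suc m) O altc Y X (Suc k) \<subseteq> altc X Y (m + Suc k)"
proof -
  have "altc X Y (Suc m) O altc Y X (Suc k) = altc X Y m O (Y O Y) O altc X Y k"
    using assms(2) by (simp del: altc.simps(2) add: altc_Suc_right[of X Y m] altc.simps(2)[of X Y k] altc.simps(2)[of Y X k] O_assoc)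
  also have "\<dots> \<subseteq> altc X Y m O Y O altc X Y k"
    using assms(1) by (intro relcomp_mono) auto
  also have "\<dots> = altc X Y (m + Suc k)"
    by (subst altc_add) (simp add: assms(2))
  finally show ?thesis .
qed

lemma chain_map:
  assumes "\<And>u v. (u,v) \<in> X \<Longrightarrow> (F u, F v) \<in> X'" "\<And>u v. (u,v) \<in> Y \<Longrightarrow> (F u, F v) \<in> Y'"
  shows "(s,s') \<in> altc X Y m \<Longrightarrow> (F s, F s') \<in> altc X' Y' m"
  using assms
proof (induction m arbitrary: X Y X' Y' s)
  case 0 then show ?case by simp
next
  case (Suc m)
  then obtain s1 where "(s,s1) \<in> X" "(s1,s') \<in> altc Y X m" by auto
  moreover have "(F s1, F s') \<in> altc Y' X' m"
    using Suc.IH[where X=Y and Y=X and X'=Y' and Y'=X' and s=s1] Suc.prems calculation by blast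
  moreover have "(F s, F s1) \<in> X'" using Suc.prems calculation by blast
  ultimately show ?case by auto
qed

lemma chain_map2:
  assumes "\<And>u v u' v'. (u,v) \<in> X \<Longrightarrow> (u',v') \<in> X \<Longrightarrow> (F u u', F v v') \<in> X'"
    "\<And>u v u' v'. (u,v) \<in> Y \<Longrightarrow> (u',v') \<in> Y \<Longrightarrow> (F u u', F v v') \<in> Y'"
  shows "(s,s') \<in> altc X Y m \<Longrightarrow> (r,r') \<in> altc X Y m \<Longrightarrow> (F s r, F s' r') \<in> altc X' Y' m"
  using assms
proof (induction m arbitrary: X Y X' Y' s r)
  case 0 then show ?case by simp
next
  case (Suc m)
  then obtain s1 r1 where "(s,s1) \<in> X" "(s1,s') \<in> altc Y X m" "(r,r1) \<in> X" "(r1,r') \<in> altc Y X m" by auto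
  moreover have "(F s1 r1, F s' r') \<in> altc Y' X' m"
    using Suc.IH[where X=Y and Y=X and X'=Y' and Y'=X' and s=s1 and r=r1] Suc.prems calculation by blast
  moreover have "(F s r, F s1 r1) \<in> X'" using Suc.prems calculation by blast
  ultimately show ?case by auto
qed

lemma altc_refl:
  "(x,x) \<in> X \<Longrightarrow> (x,x) \<in> Y \<Longrightarrow> (x,x) \<in> altc X Y m"
  by (induction m arbitrary: X Y) auto

lemma altc_collapse:
  assumes "Y \<subseteq> Id" "X O X \<subseteq> X"
  shows "altc X Y k \<subseteq> X \<union> Id \<and> altc Y X k \<subseteq> X \<union> Id"
proof (induction k)
  case 0 then show ?case by auto
next
  case (Suc k)
  then show ?case using assms by fastforce
qed


lemma cong_props:
  assumes "is_cong ar A \<theta>"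
  shows "\<theta> \<subseteq> carrier A \<times> carrier A" "converse \<theta> = \<theta>" "\<theta> O \<theta> \<subseteq> \<theta>"
    "\<And>x. x \<in> carrier A \<Longrightarrow> (x,x) \<in> \<theta>"
  using assms unfolding is_cong_def equiv_def refl_on_def sym_def trans_def by blast+

lemma conv_odd: "converse X = X \<Longrightarrow> converse Y = Y \<Longrightarrow> odd m \<Longrightarrow> (u,v) \<in> altc X Y m \<Longrightarrow> (v,u) \<in> altc X Y m"
  using altc_converse[of X Y m] by (metis converse_iff)

lemma conv_even: "converse X = X \<Longrightarrow> converse Y = Y \<Longrightarrow> even m \<Longrightarrow> (u,v) \<in> altc X Y m \<Longrightarrow> (v,u) \<in> altc Y X m"
  using altc_converse[of X Y m] by (metis converse_iff)

lemma core:
  fixes A :: "('f,'a) alg" and p :: "('f,nat) trm" and j :: "nat \<Rightarrow> ('f,nat) trm"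
  assumes ca: "is_cong ar A \<alpha>" and cb: "is_cong ar A \<beta>" and cg: "is_cong ar A \<gamma>"
    and tp: "wf_trm ar p" and tj: "\<forall>i\<in>{1..n+1}. wf_trm ar (j i)"
    and ids: "\<forall>x\<in>carrier A. \<forall>y\<in>carrier A. \<forall>z\<in>carrier A.
          (\<forall>i\<in>{1..n+1}. ev3 A (j i) x y x = x) \<and>
          ev3 A p x z z = x \<and>
          ev3 A p x x z = ev3 A (j 1) x x z \<and>
          (\<forall>i\<in>{1..n}. odd i \<longrightarrow> ev3 A (j i) x z z = ev3 A (j (i+1)) x z z) \<and>
          (\<forall>i\<in>{1..n}. even i \<longrightarrow> ev3 A (j i) x x z = ev3 A (j (i+1)) x x z) \<and>
          ev3 A (j (n+1)) x y z = z"
    and hyp: "\<alpha> \<inter> altc \<beta> (\<alpha> \<inter> \<gamma>) z \<subseteq> altc (\<alpha> \<inter> \<beta>) (\<alpha> \<inter> \<gamma>) T"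
    and oz: "odd z" and eT: "even T" and T0: "T \<noteq> 0"
    and ac: "(a,c) \<in> \<alpha>" and ch: "(a,c) \<in> altc \<beta> (\<alpha> \<inter> \<gamma>) (2*z+1)"
  shows "(a,c) \<in> altc (\<alpha> \<inter> \<gamma>) (\<alpha> \<inter> \<beta>) (T + 2*z*n)"
proof -
  define P where "P x y w = ev3 A p x y w" for x y w
  define J where "J i x y w = ev3 A (j i) x y w" for i x y w
  note pa = cong_props[OF ca] and pb = cong_props[OF cb] and pg = cong_props[OF cg]
  have sag: "converse (\<alpha> \<inter> \<gamma>) = \<alpha> \<inter> \<gamma>" by (simp add: converse_Int pa(2) pg(2))
  have sab: "converse (\<alpha> \<inter> \<beta>) = \<alpha> \<inter> \<beta>" by (simp add: converse_Int pa(2) pb(2))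
  have tag: "(\<alpha> \<inter> \<gamma>) O (\<alpha> \<inter> \<gamma>) \<subseteq> \<alpha> \<inter> \<gamma>"
  proof -
    have "(\<alpha> \<inter> \<gamma>) O (\<alpha> \<inter> \<gamma>) \<subseteq> \<alpha> O \<alpha>" "(\<alpha> \<inter> \<gamma>) O (\<alpha> \<inter> \<gamma>) \<subseteq> \<gamma> O \<gamma>"
      by (intro relcomp_mono; simp)+
    then show ?thesis using pa(3) pg(3) by blast
  qed
  have tab: "(\<alpha> \<inter> \<beta>) O (\<alpha> \<inter> \<beta>) \<subseteq> \<alpha> \<inter> \<beta>"
  proof -
    have "(\<alpha> \<inter> \<beta>) O (\<alpha> \<inter> \<beta>) \<subseteq> \<alpha> O \<alpha>" "(\<alpha> \<inter> \<beta>) O (\<alpha> \<inter> \<beta>) \<subseteq> \<beta> O \<beta>"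
      by (intro relcomp_mono; simp)+
    then show ?thesis using pa(3) pb(3) by blast
  qed
  have sbg: "converse \<beta> = \<beta>" by (rule pb(2))
  note I = ids[rule_format]
  have idj: "ev3 A (j i) x y x = x" if "i \<in> {1..n+1}" "x \<in> carrier A" "y \<in> carrier A" for i x y
    using conjunct1[OF I[OF that(2,3,2)]] that(1) by blast
  have idp: "ev3 A p x z z = x" if "x \<in> carrier A" "z \<in> carrier A" for x z
    using I[OF that(1,2,2)] by blast
  have idpj: "ev3 A p x x z = ev3 A (j 1) x x z" if "x \<in> carrier A" "z \<in> carrier A" for x z
    using I[OF that(1,2,2)] by blast
  have idodd: "ev3 A (j i) x z z = ev3 A (j (i+1)) x z z" if "i \<in> {1..n}" "odd i" "x \<in> carrier A" "z \<in> carrier A" for i x z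
    using I[OF that(3,3,4)] that(1,2) by blast
  have ideven: "ev3 A (j i) x x z = ev3 A (j (i+1)) x x z" if "i \<in> {1..n}" "even i" "x \<in> carrier A" "z \<in> carrier A" for i x z
    using I[OF that(3,3,4)] that(1,2) by blast
  have idlast: "ev3 A (j (n+1)) x y z = z" if "x \<in> carrier A" "y \<in> carrier A" "z \<in> carrier A" for x y z
    using I[OF that] by blast
  have acar: "a \<in> carrier A" "c \<in> carrier A" using ac pa by auto
  have "2*z+1 = z + Suc z" by simp
  then have "(a,c) \<in> altc \<beta> (\<alpha> \<inter> \<gamma>) (z + Suc z)" using ch by metis
  then have "(a,c) \<in> altc \<beta> (\<alpha> \<inter> \<gamma>) z O (if even z then altc \<beta> (\<alpha> \<inter> \<gamma>) (Suc z) else altc (\<alpha> \<inter> \<gamma>) \<beta> (Suc z))"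
    by (simp only: altc_add)
  then have "(a,c) \<in> altc \<beta> (\<alpha> \<inter> \<gamma>) z O ((\<alpha> \<inter> \<gamma>) O altc \<beta> (\<alpha> \<inter> \<gamma>) z)"
    using oz by simp
  then obtain b b' where ab: "(a,b) \<in> altc \<beta> (\<alpha> \<inter> \<gamma>) z" and bb': "(b,b') \<in> \<alpha> \<inter> \<gamma>"
    and b'c: "(b',c) \<in> altc \<beta> (\<alpha> \<inter> \<gamma>) z" by blast
  have bcar: "b \<in> carrier A" "b' \<in> carrier A" using bb' pa by auto
  define e where "e = P a b b'"
  have ae: "(a, e) \<in> \<alpha> \<inter> \<gamma>"
  proof -
    have "P a b b = a" using idp acar bcar unfolding P_def by blast
    moreover have "(P a b b, P a b b') \<in> \<alpha>"
      unfolding P_def using bb' by (intro ev3_cong[OF ca tp] pa(4) acar bcar) auto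
    moreover have "(P a b b, P a b b') \<in> \<gamma>"
      unfolding P_def using bb' by (intro ev3_cong[OF cg tp] pg(4) acar bcar) auto
    ultimately show ?thesis unfolding e_def by auto
  qed
  have ba: "(b,a) \<in> altc \<beta> (\<alpha> \<inter> \<gamma>) z" using conv_odd[OF sbg sag oz ab] .
  have ep: "(e, P a a c) \<in> altc \<beta> (\<alpha> \<inter> \<gamma>) z"
    unfolding e_def
  proof (rule chain_map2[where F="\<lambda>s r. P a s r", OF _ _ ba b'c])
    fix u v u' v' assume "(u,v) \<in> \<beta>" "(u',v') \<in> \<beta>"
    then show "(P a u u', P a v v') \<in> \<beta>" unfolding P_def by (intro ev3_cong[OF cb tp] pb(4) acar)
  next
    fix u v u' v' assume "(u,v) \<in> \<alpha> \<inter> \<gamma>" "(u',v') \<in> \<alpha> \<inter> \<gamma>"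
    then show "(P a u u', P a v v') \<in> \<alpha> \<inter> \<gamma>" unfolding P_def
      by (auto intro!: ev3_cong[OF ca tp] ev3_cong[OF cg tp] pa(4) pg(4) acar)
  qed
  have j1: "1 \<in> {1..n+1}" by simp
  have Jalpha: "\<And>i u. i \<in> {1..n+1} \<Longrightarrow> u \<in> carrier A \<Longrightarrow> (J i a u c, a) \<in> \<alpha>"
  proof -
    fix i u assume i: "i \<in> {1..n+1}" and u: "u \<in> carrier A"
    have ca': "(c,a) \<in> \<alpha>" using ac pa(2) by (metis converse_iff)
    have "(J i a u c, J i a u a) \<in> \<alpha>" unfolding J_def
      by (intro ev3_cong[OF ca] bspec[OF tj i] pa(4) acar u ca')
    moreover have "J i a u a = a" unfolding J_def using idj i acar u by blast
    ultimately show "(J i a u c, a) \<in> \<alpha>" by simp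
  qed
  have Paac: "P a a c = J 1 a a c" unfolding P_def J_def using idpj acar by blast
  have pa_a: "(P a a c, a) \<in> \<alpha>" using Jalpha[OF j1 acar(1)] Paac by simp
  have "(P a a c, e) \<in> \<alpha> O \<alpha>" using pa_a ae by blast
  then have "(P a a c, e) \<in> \<alpha>" using pa(3) by blast
  moreover have "(P a a c, e) \<in> altc \<beta> (\<alpha> \<inter> \<gamma>) z" using conv_odd[OF sbg sag oz ep] .
  ultimately have "(P a a c, e) \<in> altc (\<alpha> \<inter> \<beta>) (\<alpha> \<inter> \<gamma>) T" using hyp by blast
  then have pe: "(e, P a a c) \<in> altc (\<alpha> \<inter> \<gamma>) (\<alpha> \<inter> \<beta>) T" using conv_even[OF sab sag eT] by blast
  have ajoin: "(x,y) \<in> \<alpha>" if "(x,a) \<in> \<alpha>" "(y,a) \<in> \<alpha>" for x y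
  proof -
    have "(a,y) \<in> \<alpha>" using that(2) pa(2) by (metis converse_iff)
    then have "(x,y) \<in> \<alpha> O \<alpha>" using that(1) by blast
    then show ?thesis using pa(3) by blast
  qed
  have seg: "\<And>i. i \<in> {1..n+1} \<Longrightarrow> (J i a a c, J i a c c) \<in> altc (\<alpha> \<inter> \<beta>) (\<alpha> \<inter> \<gamma>) (Suc (2*z))"
  proof -
    fix i assume i: "i \<in> {1..n+1}"
    have ch': "(a,c) \<in> altc \<beta> (\<alpha> \<inter> \<gamma>) (Suc (2*z))" using ch by simp
    show "(J i a a c, J i a c c) \<in> altc (\<alpha> \<inter> \<beta>) (\<alpha> \<inter> \<gamma>) (Suc (2*z))"
    proof (rule chain_map[where F="\<lambda>u. J i a u c", OF _ _ ch'])
      fix u v assume uv: "(u,v) \<in> \<beta>"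
      then have "u \<in> carrier A" "v \<in> carrier A" using pb(1) by auto
      then have "(J i a u c, J i a v c) \<in> \<alpha>" using Jalpha[OF i] ajoin by blast
      moreover have "(J i a u c, J i a v c) \<in> \<beta>" unfolding J_def using uv
        by (intro ev3_cong[OF cb] bspec[OF tj i] pb(4) acar)
      ultimately show "(J i a u c, J i a v c) \<in> \<alpha> \<inter> \<beta>" by simp
    next
      fix u v assume uv: "(u,v) \<in> \<alpha> \<inter> \<gamma>"
      then have "u \<in> carrier A" "v \<in> carrier A" using pa(1) by auto
      then have "(J i a u c, J i a v c) \<in> \<alpha>" using Jalpha[OF i] ajoin by blast
      moreover have "(J i a u c, J i a v c) \<in> \<gamma>" unfolding J_def using uv
        by (intro ev3_cong[OF cg] bspec[OF tj i] pg(4) acar) auto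
      ultimately show "(J i a u c, J i a v c) \<in> \<alpha> \<inter> \<gamma>" by simp
    qed
  qed
  define w where "w k = (if odd k then J k a a c else J k a c c)" for k
  have wchain: "k \<le> n \<Longrightarrow> (w 1, w (Suc k)) \<in> altc (\<alpha> \<inter> \<beta>) (\<alpha> \<inter> \<gamma>) (Suc (2*z*k))" for k
  proof (induction k)
    case 0
    have "(w 1, a) \<in> \<alpha>" using Jalpha[OF j1 acar(1)] unfolding w_def by simp
    then have "w 1 \<in> carrier A" using pa(1) by auto
    then have "(w 1, w 1) \<in> \<alpha> \<inter> \<beta>" using pa(4) pb(4) by blast
    then show ?case by simp
  next
    case (Suc k)
    have i: "Suc k \<in> {1..n}" "Suc k \<in> {1..n+1}" using Suc.prems by auto
    have "(w (Suc k), w (Suc (Suc k))) \<in> altc (\<alpha> \<inter> \<beta>) (\<alpha> \<inter> \<gamma>) (Suc (2*z))"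
    proof (cases "odd (Suc k)")
      case True
      have "J (Suc k) a c c = J (Suc k + 1) a c c" unfolding J_def using idodd i True acar by blast
      then show ?thesis using seg[OF i(2)] True unfolding w_def by simp
    next
      case False
      have "J (Suc k) a a c = J (Suc k + 1) a a c" unfolding J_def using ideven i False acar by blast
      moreover have "(J (Suc k) a c c, J (Suc k) a a c) \<in> altc (\<alpha> \<inter> \<beta>) (\<alpha> \<inter> \<gamma>) (Suc (2*z))"
        using conv_odd[OF sab sag _ seg[OF i(2)]] by simp
      ultimately show ?thesis using False unfolding w_def by simp
    qed
    moreover have "(w 1, w (Suc k)) \<in> altc (\<alpha> \<inter> \<beta>) (\<alpha> \<inter> \<gamma>) (Suc (2*z*k))" using Suc by simp
    ultimately have "(w 1, w (Suc (Suc k))) \<in> altc (\<alpha> \<inter> \<beta>) (\<alpha> \<inter> \<gamma>) (2*z*k + Suc (2*z))"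
      using altc_merge[OF tab, of "2*z*k" "\<alpha> \<inter> \<gamma>" "2*z"] by auto
    then show ?case by (simp add: algebra_simps)
  qed
  have w1: "w 1 = P a a c" using Paac unfolding w_def by simp
  have wn: "w (Suc n) = c" unfolding w_def J_def using idlast[OF acar(1) acar(1) acar(2)] idlast[OF acar(1) acar(2) acar(2)] by simp
  have jp: "(P a a c, c) \<in> altc (\<alpha> \<inter> \<beta>) (\<alpha> \<inter> \<gamma>) (Suc (2*z*n))" using wchain[of n] w1 wn by simp
  obtain T1 where T1: "T = Suc T1" "odd T1" using T0 eT by (cases T) auto
  have "(a,e) \<in> altc (\<alpha> \<inter> \<gamma>) (\<alpha> \<inter> \<beta>) (Suc 0)" using ae by simp
  then have "(a, P a a c) \<in> altc (\<alpha> \<inter> \<gamma>) (\<alpha> \<inter> \<beta>) (0 + Suc T1)"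
    using altc_merge[OF tag, of 0 "\<alpha> \<inter> \<beta>" T1] pe T1 by blast
  then have "(a, c) \<in> altc (\<alpha> \<inter> \<gamma>) (\<alpha> \<inter> \<beta>) (T1 + Suc (2*z*n))"
    using altc_merge_odd[OF tab T1(2), of "\<alpha> \<inter> \<gamma>" "2*z*n"] jp by auto
  then show ?thesis using T1 by simp
qed


lemma step:
  fixes U :: "'a itself" and ar :: "'f \<Rightarrow> nat"
  assumes gumm: "has_gumm_terms U ar \<Sigma> n" and hyp: "sat_incl U ar \<Sigma> z T"
    and oz: "odd z" and z3: "z \<ge> 3" and eT: "even T"
  shows "sat_incl U ar \<Sigma> (2*z+1) (T + 2*z*n)"
proof -
  obtain p j where tp: "ternary ar p" and tj: "\<forall>i\<in>{1..n+1}. ternary ar (j i)"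
    and ids: "\<forall>A :: ('f, 'a) alg. in_var ar \<Sigma> A \<longrightarrow>
        (\<forall>x\<in>carrier A. \<forall>y\<in>carrier A. \<forall>z\<in>carrier A.
          (\<forall>i\<in>{1..n+1}. ev3 A (j i) x y x = x) \<and>
          ev3 A p x z z = x \<and>
          ev3 A p x x z = ev3 A (j 1) x x z \<and>
          (\<forall>i\<in>{1..n}. odd i \<longrightarrow> ev3 A (j i) x z z = ev3 A (j (i+1)) x z z) \<and>
          (\<forall>i\<in>{1..n}. even i \<longrightarrow> ev3 A (j i) x x z = ev3 A (j (i+1)) x x z) \<and>
          ev3 A (j (n+1)) x y z = z)"
    using gumm unfolding has_gumm_terms_def by blast
  have wp: "wf_trm ar p" using tp unfolding ternary_def by simp
  have wj: "\<forall>i\<in>{1..n+1}. wf_trm ar (j i)" using tj unfolding ternary_def by simp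
  show ?thesis unfolding sat_incl_def
  proof (intro allI impI subsetI)
    fix A :: "('f,'a) alg" and \<alpha> \<beta> \<gamma> x
    assume iv: "in_var ar \<Sigma> A" and ca: "is_cong ar A \<alpha>" and cb: "is_cong ar A \<beta>" and cg: "is_cong ar A \<gamma>"
      and x: "x \<in> \<alpha> \<inter> altc \<beta> (\<alpha> \<inter> \<gamma>) (2*z+1)"
    obtain a c where xac: "x = (a,c)" by (cases x)
    have ac: "(a,c) \<in> \<alpha>" and ch: "(a,c) \<in> altc \<beta> (\<alpha> \<inter> \<gamma>) (2*z+1)" using x xac by auto
    have hA: "\<alpha> \<inter> altc \<beta> (\<alpha> \<inter> \<gamma>) z \<subseteq> altc (\<alpha> \<inter> \<beta>) (\<alpha> \<inter> \<gamma>) T"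
      using hyp iv ca cb cg unfolding sat_incl_def by blast
    note pa = cong_props[OF ca] and pb = cong_props[OF cb] and pg = cong_props[OF cg]
    have acar: "a \<in> carrier A" "c \<in> carrier A" using ac pa(1) by auto
    have sag: "converse (\<alpha> \<inter> \<gamma>) = \<alpha> \<inter> \<gamma>" by (simp add: converse_Int pa(2) pg(2))
    have sab: "converse (\<alpha> \<inter> \<beta>) = \<alpha> \<inter> \<beta>" by (simp add: converse_Int pa(2) pb(2))
    show "x \<in> altc (\<alpha> \<inter> \<beta>) (\<alpha> \<inter> \<gamma>) (T + 2*z*n)"
    proof (cases "T = 0")
      case True
      then have h0: "\<alpha> \<inter> altc \<beta> (\<alpha> \<inter> \<gamma>) z \<subseteq> Id" using hA by simp
      obtain z' where z': "z = Suc (Suc z')" using z3 by (cases z; cases "z - 1") auto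
      have agId: "\<alpha> \<inter> \<gamma> \<subseteq> Id"
      proof
        fix y assume y: "y \<in> \<alpha> \<inter> \<gamma>"
        obtain u v where yuv: "y = (u,v)" by (cases y)
        have uv: "(u,v) \<in> \<alpha> \<inter> \<gamma>" using y yuv by simp
        then have uc: "u \<in> carrier A" "v \<in> carrier A" using pa(1) by auto
        have "(v,v) \<in> altc \<beta> (\<alpha> \<inter> \<gamma>) z'" using pa(4) pb(4) pg(4) uc by (intro altc_refl) auto
        moreover have "(u,u) \<in> \<beta>" using pb(4) uc by simp
        ultimately have "(u,v) \<in> altc \<beta> (\<alpha> \<inter> \<gamma>) z" using uv z' by auto
        then show "y \<in> Id" using h0 uv yuv by blast
      qed
      have abId: "\<alpha> \<inter> \<beta> \<subseteq> Id"
      proof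
        fix y assume y: "y \<in> \<alpha> \<inter> \<beta>"
        obtain u v where yuv: "y = (u,v)" by (cases y)
        have uv: "(u,v) \<in> \<alpha> \<inter> \<beta>" using y yuv by simp
        then have uc: "u \<in> carrier A" "v \<in> carrier A" using pa(1) by auto
        have "(v,v) \<in> altc (\<alpha> \<inter> \<gamma>) \<beta> (Suc z')" using pa(4) pb(4) pg(4) uc by (intro altc_refl) auto
        then have "(u,v) \<in> altc \<beta> (\<alpha> \<inter> \<gamma>) z" using uv z' by auto
        then show "y \<in> Id" using h0 uv yuv by blast
      qed
      have "altc \<beta> (\<alpha> \<inter> \<gamma>) (2*z+1) \<subseteq> \<beta> \<union> Id"
        using altc_collapse[OF agId pb(3)] by blast
      then have "(a,c) \<in> \<beta> \<union> Id" using ch by blast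
      then have "a = c" using abId ac by blast
      moreover have "(a,a) \<in> altc (\<alpha> \<inter> \<beta>) (\<alpha> \<inter> \<gamma>) (T + 2*z*n)"
        using pa(4) pb(4) pg(4) acar by (intro altc_refl) auto
      ultimately show ?thesis using xac by simp
    next
      case False
      have I: "\<forall>x\<in>carrier A. \<forall>y\<in>carrier A. \<forall>z\<in>carrier A.
          (\<forall>i\<in>{1..n+1}. ev3 A (j i) x y x = x) \<and>
          ev3 A p x z z = x \<and>
          ev3 A p x x z = ev3 A (j 1) x x z \<and>
          (\<forall>i\<in>{1..n}. odd i \<longrightarrow> ev3 A (j i) x z z = ev3 A (j (i+1)) x z z) \<and>
          (\<forall>i\<in>{1..n}. even i \<longrightarrow> ev3 A (j i) x x z = ev3 A (j (i+1)) x x z) \<and>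
          ev3 A (j (n+1)) x y z = z" using ids iv by blast
      have ca': "(c,a) \<in> \<alpha>" using ac pa(2) by (metis converse_iff)
      have ch': "(c,a) \<in> altc \<beta> (\<alpha> \<inter> \<gamma>) (2*z+1)" using conv_odd[OF pb(2) sag _ ch] by simp
      have "(c,a) \<in> altc (\<alpha> \<inter> \<gamma>) (\<alpha> \<inter> \<beta>) (T + 2*z*n)"
        by (rule core[OF ca cb cg wp wj I hA oz eT False ca' ch'])
      then have "(a,c) \<in> altc (\<alpha> \<inter> \<beta>) (\<alpha> \<inter> \<gamma>) (T + 2*z*n)"
        using conv_even[OF sag sab] eT by simp
      then show ?thesis using xac by simp
    qed
  qed
qed


lemma pow_ge: "2^(q+1) \<ge> (q::nat) + 2"
  by (induction q) auto

theorem corollary4p9: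
  fixes ar :: "'f \<Rightarrow> nat"
    and \<Sigma> :: "(('f, nat) trm \<times> ('f, nat) trm) set"
    and U :: "'a itself"
    and n h t :: nat
  assumes "\<forall>(s, u)\<in>\<Sigma>. wf_trm ar s \<and> wf_trm ar u"
    and "h \<ge> 1" and "even t"
    and "has_gumm_terms U ar \<Sigma> n"
    and "sat_incl U ar \<Sigma> (2*h+1) t"
  shows "sat_incl U ar \<Sigma> (4*h+3) (t + (4*h+2)*n) \<and>
    (\<forall>p\<ge>1. sat_incl U ar \<Sigma> (2^p*(h+1) - 1)
       (t + (2^(p+1) - 4)*h*n + (2^(p+1) - 2*p - 2)*n))"
proof -
  have S: "sat_incl U ar \<Sigma> (2^(q+1)*(h+1) - 1)
       (t + (2^(q+2) - 4)*h*n + (2^(q+2) - 2*(q+1) - 2)*n)" for q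
  proof (induction q)
    case 0
    have "2^(0+1)*(h+1) - 1 = 2*h+1" by simp
    moreover have "t + (2^(0+2) - 4)*h*n + (2^(0+2) - 2*(0+1) - 2)*n = t" by simp
    ultimately show ?case using assms(5) by simp
  next
    case (Suc q)
    define K :: nat where "K = 2^(q+1)"
    have K: "K \<ge> q + 2" using pow_ge[of q] K_def by simp
    have K2: "2^(Suc q + 1) = 2*K" "2^(q+2) = 2*K" "2^(Suc q + 2) = 4*K" unfolding K_def by simp_all
    define z where "z = K*(h+1) - 1"
    define T where "T = t + (2*K - 4)*h*n + (2*K - 2*(q+1) - 2)*n"
    have zK: "z + 1 = K*(h+1)" unfolding z_def using K by (cases K) auto
    have oz: "odd z"
    proof -
      have "even K" using K_def by simp
      then have "even (K*(h+1))" by simp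
      then have "even (z+1)" using zK by simp
      then show ?thesis by simp
    qed
    have "K*(h+1) \<ge> 2*2" using K assms(2) by (intro mult_le_mono) auto
    then have z3: "z \<ge> 3" using zK by linarith
    have eT: "even T" unfolding T_def using assms(3) by simp
    have hyp: "sat_incl U ar \<Sigma> z T" unfolding z_def T_def K2(2)[symmetric] unfolding K_def using Suc.IH .
    have st: "sat_incl U ar \<Sigma> (2*z+1) (T + 2*z*n)" by (rule step[OF assms(4) hyp oz z3 eT])
    have e1: "2*z+1 = 2^(Suc q+1)*(h+1) - 1" unfolding K2 using zK by simp
    have e2: "T + 2*z*n = t + (2^(Suc q+2) - 4)*h*n + (2^(Suc q+2) - 2*(Suc q+1) - 2)*n"
    proof -
      obtain d where Kd: "K = q + 2 + d" using K le_Suc_ex by blast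
      have T': "T = t + (2*q+2*d)*h*n + (2*d)*n" unfolding T_def Kd by simp
      have R: "(2^(Suc q+2) - 4)*h*n + (2^(Suc q+2) - 2*(Suc q+1) - 2)*n = (4*q+4+4*d)*h*n + (2*q+2+4*d)*n"
        unfolding K2 Kd by simp
      have "2*z*n + 2*n = 2*(z+1)*n" by (simp add: algebra_simps)
      also have "\<dots> = 2*(K*(h+1))*n" using zK by simp
      finally have zz: "2*z*n + 2*n = 2*(q+2+d)*(h+1)*n" using Kd by simp
      have "T + 2*z*n + 2*n = t + (4*q+4+4*d)*h*n + (2*q+2+4*d)*n + 2*n"
        unfolding T' using zz by (simp add: algebra_simps)
      then show ?thesis using R by simp
    qed
    show ?case using st e1 e2 by simp
  qed
  have all: "\<forall>p\<ge>1. sat_incl U ar \<Sigma> (2^p*(h+1) - 1)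
       (t + (2^(p+1) - 4)*h*n + (2^(p+1) - 2*p - 2)*n)"
  proof (intro allI impI)
    fix p :: nat assume "p \<ge> 1"
    then obtain q where p: "p = Suc q" by (cases p) auto
    have q1: "q+1 = p" and q2: "q+2 = p+1" using p by simp_all
    show "sat_incl U ar \<Sigma> (2^p*(h+1) - 1) (t + (2^(p+1) - 4)*h*n + (2^(p+1) - 2*p - 2)*n)"
      using S[of q] unfolding q1 q2 .
  qed
  have f2: "sat_incl U ar \<Sigma> (2^2*(h+1) - 1) (t + (2^(2+1) - 4)*h*n + (2^(2+1) - 2*2 - 2)*n)"
    using all[rule_format, of 2] by simp
  have e1: "2^2*(h+1) - 1 = 4*h+3" by simp
  have e2: "t + (2^(2+1) - 4)*h*n + (2^(2+1) - 2*2 - 2)*n = t + (4*h+2)*n" by (simp add: algebra_simps)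
  have "sat_incl U ar \<Sigma> (4*h+3) (t + (4*h+2)*n)" using f2 unfolding e1 e2 .
  then show ?thesis using all by (intro conjI)
qed

end
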